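(* Let $\alpha\in\mathbb R\setminus\{0\}$ and $\mathbf L=\mathbf a^2-\alpha^2\mathbf 1$ on $\mathcal H_a$. Define $\mathcal E^a_{\mathbf L}=\mathrm{Span}\{(\mathbf L^\dagger)^j|v\rangle\mid j\in\mathbb N,\ |v\rangle\in\ker\mathbf L\}$ and $\mathcal E^\sharp_{\mathbf L}=\mathrm{Span}\{(\mathbf L^\dagger)^j[\mathbf L,\mathbf L^\dagger]|v\rangle\mid j\in\mathbb N,\ |v\rangle\in\ker\mathbf L\}$. Then $\mathcal E^a_{\mathbf L}+\mathcal E^\sharp_{\mathbf L}$ is dense in $\mathcal H_a$.
   Context: $\mathcal H_a=L^2(\mathbb R,\mathbb C)$ with Fock basis $(|n\rangle)$, $\mathbf a=\frac1{\sqrt2}(x+\partial_x)$ the annihilation operator, $\mathbf a^\dagger$ the creation operator. $\ker\mathbf L$ is spanned by the coherent states $|\alpha\rangle,|-\alpha\rangle$, where $|z\rangle=e^{-|z|^2/2}\sum_n\frac{z^n}{\sqrt{n!}}|n\rangle$; these vectors lie in the domain of every polynomial in $\mathbf a,\mathbf a^\dagger$, so the expressions above are well defined, with $[\mathbf L,\mathbf L^\dagger]=\mathbf L\mathbf L^\dagger-\mathbf L^\dagger\mathbf L$. *)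

theory Defs
  imports Complex_Main
begin

text \<open>H_a = L^2(R) is represented, via the unitary Fock-basis isomorphism, by
  l^2(N, C): a vector is its sequence of Fock coefficients (n-th entry = coefficient of |n>).\<close>

definition ell2 :: "(nat \<Rightarrow> complex) set" where
  "ell2 = {f. summable (\<lambda>n. (cmod (f n))^2)}"

text \<open>Annihilation operator: a|n> = sqrt n |n-1>, i.e. (a f)_n = sqrt(n+1) f_(n+1).\<close>
definition ann :: "(nat \<Rightarrow> complex) \<Rightarrow> nat \<Rightarrow> complex" where
  "ann f n = complex_of_real (sqrt (real (Suc n))) * f (Suc n)"

text \<open>Creation operator: a^dag|n> = sqrt(n+1) |n+1>, i.e. (a^dag f)_n = sqrt n f_(n-1).\<close>
definition cre :: "(nat \<Rightarrow> complex) \<Rightarrow> nat \<Rightarrow> complex" where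
  "cre f n = (if n = 0 then 0 else complex_of_real (sqrt (real n)) * f (n - 1))"

definition Lop :: "real \<Rightarrow> (nat \<Rightarrow> complex) \<Rightarrow> nat \<Rightarrow> complex" where
  "Lop \<alpha> f = (\<lambda>n. ann (ann f) n - complex_of_real (\<alpha>^2) * f n)"

definition Ldag :: "real \<Rightarrow> (nat \<Rightarrow> complex) \<Rightarrow> nat \<Rightarrow> complex" where
  "Ldag \<alpha> f = (\<lambda>n. cre (cre f) n - complex_of_real (\<alpha>^2) * f n)"

definition commL :: "real \<Rightarrow> (nat \<Rightarrow> complex) \<Rightarrow> nat \<Rightarrow> complex" where
  "commL \<alpha> f = (\<lambda>n. Lop \<alpha> (Ldag \<alpha> f) n - Ldag \<alpha> (Lop \<alpha> f) n)"

definition kerL :: "real \<Rightarrow> (nat \<Rightarrow> complex) set" where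
  "kerL \<alpha> = {v \<in> ell2. Lop \<alpha> v = (\<lambda>_. 0)}"

definition cspan :: "(nat \<Rightarrow> complex) set \<Rightarrow> (nat \<Rightarrow> complex) set" where
  "cspan S = {x. \<exists>F c. finite F \<and> F \<subseteq> S \<and> x = (\<lambda>n. \<Sum>v\<in>F. c v * v n)}"

definition Ea :: "real \<Rightarrow> (nat \<Rightarrow> complex) set" where
  "Ea \<alpha> = cspan {(Ldag \<alpha> ^^ j) v | j v. v \<in> kerL \<alpha>}"

definition Esharp :: "real \<Rightarrow> (nat \<Rightarrow> complex) set" where
  "Esharp \<alpha> = cspan {(Ldag \<alpha> ^^ j) (commL \<alpha> v) | j v. v \<in> kerL \<alpha>}"

definition setsum_fun :: "(nat \<Rightarrow> complex) set \<Rightarrow> (nat \<Rightarrow> complex) set \<Rightarrow> (nat \<Rightarrow> complex) set" where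
  "setsum_fun A B = {(\<lambda>n. x n + y n) | x y. x \<in> A \<and> y \<in> B}"

definition dense_ell2 :: "(nat \<Rightarrow> complex) set \<Rightarrow> bool" where
  "dense_ell2 D \<longleftrightarrow> (\<forall>f\<in>ell2. \<forall>\<epsilon>>0. \<exists>g\<in>D.
      summable (\<lambda>n. (cmod (f n - g n))^2) \<and> (\<Sum>n. (cmod (f n - g n))^2) < \<epsilon>)"

end

theory Submission
  imports Defs "HOL-Analysis.Convex"
begin


lemma cspan_zero: "(\<lambda>_. 0) \<in> cspan S"
  unfolding cspan_def by (rule CollectI, rule exI[of _ "{}"]) auto

lemma cspan_base: "v \<in> S \<Longrightarrow> v \<in> cspan S"
  unfolding cspan_def by (rule CollectI, rule exI[of _ "{v}"], rule exI[of _ "\<lambda>_. 1"]) auto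

lemma cspan_lin:
  assumes "x \<in> cspan S" "y \<in> cspan S"
  shows "(\<lambda>n. r * x n + s * y n) \<in> cspan S"
proof -
  obtain F1 c1 where 1: "finite F1" "F1 \<subseteq> S" "x = (\<lambda>n. \<Sum>v\<in>F1. c1 v * v n)"
    using assms(1) unfolding cspan_def by blast
  obtain F2 c2 where 2: "finite F2" "F2 \<subseteq> S" "y = (\<lambda>n. \<Sum>v\<in>F2. c2 v * v n)"
    using assms(2) unfolding cspan_def by blast
  define c where "c v = r * (if v \<in> F1 then c1 v else 0) + s * (if v \<in> F2 then c2 v else 0)" for v
  have "(\<lambda>n. r * x n + s * y n) = (\<lambda>n. \<Sum>v\<in>F1 \<union> F2. c v * v n)"
  proof
    fix n
    have a: "(\<Sum>v\<in>F1 \<union> F2. (if v \<in> F1 then c1 v * v n else 0)) = (\<Sum>v\<in>F1. c1 v * v n)"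
      using sum.inter_restrict[of "F1 \<union> F2" "\<lambda>v. c1 v * v n" F1] 1 2
      by (simp add: Int_absorb1)
    have b: "(\<Sum>v\<in>F1 \<union> F2. (if v \<in> F2 then c2 v * v n else 0)) = (\<Sum>v\<in>F2. c2 v * v n)"
      using sum.inter_restrict[of "F1 \<union> F2" "\<lambda>v. c2 v * v n" F2] 1 2
      by (simp add: Int_absorb1)
    have "(\<Sum>v\<in>F1 \<union> F2. c v * v n) = r * (\<Sum>v\<in>F1 \<union> F2. (if v \<in> F1 then c1 v * v n else 0))
        + s * (\<Sum>v\<in>F1 \<union> F2. (if v \<in> F2 then c2 v * v n else 0))"
      unfolding c_def sum_distrib_left sum.distrib[symmetric] by (rule sum.cong) (auto simp: algebra_simps)
    then show "r * x n + s * y n = (\<Sum>v\<in>F1 \<union> F2. c v * v n)"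
      using a b 1 2 by simp
  qed
  then show ?thesis unfolding cspan_def using 1 2 by blast
qed

lemma cspan_sum:
  assumes "finite K" "\<And>k. k \<in> K \<Longrightarrow> w k \<in> cspan S"
  shows "(\<lambda>n. \<Sum>k\<in>K. d k * w k n) \<in> cspan S"
  using assms
proof (induction K rule: finite_induct)
  case empty then show ?case using cspan_zero by simp
next
  case (insert a F)
  have "(\<lambda>n. 1 * (\<Sum>k\<in>F. d k * w k n) + d a * w a n) \<in> cspan S"
    by (rule cspan_lin) (use insert in auto)
  then show ?case using insert by (simp add: add.commute)
qed

lemma cre_sum: "cre (\<lambda>n. \<Sum>v\<in>F. c v * w v n) n = (\<Sum>v\<in>F. c v * cre (w v) n)"
  unfolding cre_def by (simp add: sum_distrib_left mult.left_commute)

lemma Ldag_sum: "Ldag \<alpha> (\<lambda>n. \<Sum>v\<in>F. c v * v n) = (\<lambda>n. \<Sum>v\<in>F. c v * Ldag \<alpha> v n)"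
proof
  fix n
  have "cre (cre (\<lambda>n. \<Sum>v\<in>F. c v * v n)) n = (\<Sum>v\<in>F. c v * cre (cre v) n)"
  proof -
    have "cre (\<lambda>n. \<Sum>v\<in>F. c v * v n) = (\<lambda>m. \<Sum>v\<in>F. c v * cre v m)"
      by (rule ext, rule cre_sum)
    then show ?thesis using cre_sum[where F=F and c=c and w="\<lambda>v. cre v"] by simp
  qed
  then show "Ldag \<alpha> (\<lambda>n. \<Sum>v\<in>F. c v * v n) n = (\<Sum>v\<in>F. c v * Ldag \<alpha> v n)"
    unfolding Ldag_def by (simp add: sum_distrib_left sum_subtractf algebra_simps)
qed

lemma cspan_Ldag:
  assumes "x \<in> cspan S" "\<And>v. v \<in> S \<Longrightarrow> Ldag \<alpha> v \<in> S"
  shows "Ldag \<alpha> x \<in> cspan S"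
proof -
  obtain F c where 1: "finite F" "F \<subseteq> S" "x = (\<lambda>n. \<Sum>v\<in>F. c v * v n)"
    using assms(1) unfolding cspan_def by blast
  show ?thesis unfolding 1 Ldag_sum
    by (rule cspan_sum) (use 1 assms(2) cspan_base in auto)
qed



lemma sq_sqrt_c: "complex_of_real (sqrt (real n)) * complex_of_real (sqrt (real n)) = of_nat n"
  by (simp flip: of_real_mult)

lemma ann_cre: "ann (cre v) = (\<lambda>n. of_nat (Suc n) * v n)"
  unfolding ann_def cre_def by (rule ext) (simp add: mult.assoc[symmetric] sq_sqrt_c del: of_nat_Suc)

lemma cre_ann: "cre (ann v) = (\<lambda>n. of_nat n * v n)"
proof
  fix n show "cre (ann v) n = of_nat n * v n"
    unfolding ann_def cre_def by (cases n) (simp_all add: mult.assoc[symmetric] sq_sqrt_c del: of_nat_Suc)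
qed

lemma ann_scale: "ann (\<lambda>m. of_nat (g m) * w m) = (\<lambda>n. of_nat (g (Suc n)) * ann w n)"
  unfolding ann_def by (rule ext) (simp add: algebra_simps)

lemma cre_scale: "cre (\<lambda>m. of_nat (g m) * w m) = (\<lambda>n. of_nat (g (n - 1)) * cre w n)"
  unfolding cre_def by (rule ext) (simp add: algebra_simps)

lemma ann_lin: "ann (\<lambda>n. x n - c * y n) = (\<lambda>n. ann x n - c * ann y n)"
  unfolding ann_def by (rule ext) (simp add: algebra_simps)

lemma cre_lin: "cre (\<lambda>n. x n - c * y n) = (\<lambda>n. cre x n - c * cre y n)"
  unfolding cre_def by (rule ext) (simp add: algebra_simps)

lemma aacc: "ann (ann (cre (cre v))) n = of_nat (Suc (Suc n)) * (of_nat (Suc n) * v n)"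
  by (simp add: ann_cre ann_scale del: of_nat_Suc)

lemma ccaa: "cre (cre (ann (ann v))) n = of_nat (n - 1) * (of_nat n * v n)"
  by (simp add: cre_ann cre_scale)

lemma commL_eq: "commL \<alpha> v n = of_nat (4*n+2) * v n"
proof -
  have e: "commL \<alpha> v n = ann (ann (cre (cre v))) n - cre (cre (ann (ann v))) n"
    unfolding commL_def Lop_def Ldag_def by (simp add: ann_lin cre_lin) (simp add: algebra_simps)
  have g: "a*b = c*d + e \<Longrightarrow> a*(b*x) - c*(d*x) = e*(x::complex)" for a b c d e x
  proof -
    assume h: "a*b = c*d + e"
    have "a*(b*x) - c*(d*x) = (a*b - c*d)*x" by (simp add: algebra_simps)
    then show ?thesis using h by simp
  qed
  have "(of_nat (Suc (Suc n)) * of_nat (Suc n) :: complex) = of_nat (n - 1) * of_nat n + of_nat (4*n+2)"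
    by (cases n) (simp_all add: algebra_simps)
  then show ?thesis unfolding e aacc ccaa by (rule g)
qed



definition coh :: "real \<Rightarrow> nat \<Rightarrow> complex" where
  "coh \<alpha> n = of_real (sqrt (fact n) * \<alpha>^n / fact n)"

lemma sqrt_fact_Suc: "sqrt (fact (Suc n)) = sqrt (real (Suc n)) * sqrt (fact n)"
  by (simp add: real_sqrt_mult del: of_nat_Suc)

lemma cre_pow_coh:
  "(cre ^^ k) (coh \<alpha>) n = (if k \<le> n then of_real (sqrt (fact n) * \<alpha>^(n-k) / fact (n-k)) else 0)"
proof (induction k arbitrary: n)
  case 0 then show ?case by (simp add: coh_def)
next
  case (Suc k)
  show ?case
  proof (cases n)
    case 0 then show ?thesis by (simp add: cre_def)
  next
    case (Suc m)
    have "(cre ^^ Suc k) (coh \<alpha>) n = of_real (sqrt (real (Suc m))) * (cre ^^ k) (coh \<alpha>) m"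
      using Suc by (simp add: cre_def)
    also have "\<dots> = (if Suc k \<le> n then of_real (sqrt (fact n) * \<alpha>^(n - Suc k) / fact (n - Suc k)) else 0)"
      using Suc by (simp add: Suc.IH real_sqrt_mult of_real_mult)
    finally show ?thesis .
  qed
qed

lemma fact_sqrt_div: "sqrt (fact n) / fact n = 1 / sqrt (fact n)"
proof -
  have "(fact n :: real) = sqrt (fact n) * sqrt (fact n)" by simp
  then show ?thesis by (metis div_by_1 divide_divide_eq_right nonzero_mult_div_cancel_left real_sqrt_eq_zero_cancel_iff fact_nonzero)
qed

lemma coh_ell2: "coh \<alpha> \<in> ell2"
proof -
  have "(cmod (coh \<alpha> n))^2 = inverse (fact n) * (\<alpha>^2)^n" for n
  proof -
    have "(cmod (coh \<alpha> n))^2 = (sqrt (fact n) * \<alpha>^n / fact n)^2"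
      unfolding coh_def norm_of_real by (simp add: power_divide power_mult_distrib power2_abs abs_mult)
    also have "\<dots> = (\<alpha>^n)^2 * ((sqrt (fact n))^2 / (fact n)^2)" by (simp add: power_divide power_mult_distrib)
    also have "\<dots> = (\<alpha>^n)^2 / fact n" by (simp add: power2_eq_square)
    finally show ?thesis by (simp add: power_mult[symmetric] power_mult_distrib mult.commute divide_inverse flip: power_mult)
  qed
  then show ?thesis unfolding ell2_def using summable_exp[of "\<alpha>^2"] by simp
qed

lemma coh_alt: "coh \<alpha> n = of_real (\<alpha>^n / sqrt (fact n))"
  unfolding coh_def using fact_sqrt_div[of n] by (metis times_divide_eq_left times_divide_eq_right mult.commute mult_1)

lemma coh_ker: "coh \<alpha> \<in> kerL \<alpha>"
proof -
  have "Lop \<alpha> (coh \<alpha>) n = 0" for n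
  proof -
    have r: "sqrt (real (Suc n)) * sqrt (real (Suc (Suc n))) * (\<alpha>^(Suc (Suc n)) / sqrt (fact (Suc (Suc n))))
       = \<alpha>^2 * (\<alpha>^n / sqrt (fact n))"
    proof -
      have p: "sqrt (real (Suc n)) > 0" "sqrt (real (Suc (Suc n))) > 0" "sqrt (fact n) > 0" by auto
      have "sqrt (fact (Suc (Suc n))) = sqrt (real (Suc (Suc n))) * (sqrt (real (Suc n)) * sqrt (fact n))"
        by (simp only: sqrt_fact_Suc)
      then show ?thesis using p by (simp add: field_simps power2_eq_square del: of_nat_Suc)
    qed
    have "ann (ann (coh \<alpha>)) n = of_real (sqrt (real (Suc n)) * sqrt (real (Suc (Suc n))) * (\<alpha>^(Suc (Suc n)) / sqrt (fact (Suc (Suc n)))))"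
      unfolding ann_def coh_alt by (simp del: of_nat_Suc)
    then show ?thesis unfolding Lop_def r by (simp add: coh_alt)
  qed
  then show ?thesis unfolding kerL_def using coh_ell2 by auto
qed



abbreviation TT :: "real \<Rightarrow> (nat \<Rightarrow> complex) set" where
  "TT \<alpha> \<equiv> setsum_fun (Ea \<alpha>) (Esharp \<alpha>)"

lemma setsum_funI: "x \<in> A \<Longrightarrow> y \<in> B \<Longrightarrow> z = (\<lambda>n. x n + y n) \<Longrightarrow> z \<in> setsum_fun A B"
  unfolding setsum_fun_def by blast

lemma Ldag_add: "Ldag \<alpha> (\<lambda>n. x n + y n) = (\<lambda>n. Ldag \<alpha> x n + Ldag \<alpha> y n)"
  unfolding Ldag_def cre_def by (rule ext) (simp add: algebra_simps)

lemma TT_lin: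
  assumes "x \<in> TT \<alpha>" "y \<in> TT \<alpha>"
  shows "(\<lambda>n. r * x n + s * y n) \<in> TT \<alpha>"
proof -
  obtain x1 x2 where x: "x = (\<lambda>n. x1 n + x2 n)" "x1 \<in> Ea \<alpha>" "x2 \<in> Esharp \<alpha>"
    using assms(1) unfolding setsum_fun_def by blast
  obtain y1 y2 where y: "y = (\<lambda>n. y1 n + y2 n)" "y1 \<in> Ea \<alpha>" "y2 \<in> Esharp \<alpha>"
    using assms(2) unfolding setsum_fun_def by blast
  have "(\<lambda>n. r * x1 n + s * y1 n) \<in> Ea \<alpha>" using x y unfolding Ea_def by (intro cspan_lin)
  moreover have "(\<lambda>n. r * x2 n + s * y2 n) \<in> Esharp \<alpha>" using x y unfolding Esharp_def by (intro cspan_lin)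
  moreover have "(\<lambda>n. r * x n + s * y n) = (\<lambda>n. (r * x1 n + s * y1 n) + (r * x2 n + s * y2 n))"
    using x y by (auto simp: algebra_simps)
  ultimately show ?thesis by (rule setsum_funI)
qed

lemma TT_zero: "(\<lambda>_. 0) \<in> TT \<alpha>"
  by (rule setsum_funI[of "\<lambda>_. 0" _ "\<lambda>_. 0"]) (auto simp: Ea_def Esharp_def cspan_zero)

lemma TT_sum:
  assumes "finite K" "\<And>k. k \<in> K \<Longrightarrow> w k \<in> TT \<alpha>"
  shows "(\<lambda>n. \<Sum>k\<in>K. d k * w k n) \<in> TT \<alpha>"
  using assms
proof (induction K rule: finite_induct)
  case empty then show ?case using TT_zero by simp
next
  case (insert a F)
  have "(\<lambda>n. 1 * (\<Sum>k\<in>F. d k * w k n) + d a * w a n) \<in> TT \<alpha>"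
    by (rule TT_lin) (use insert in auto)
  then show ?case using insert by (simp add: add.commute)
qed

lemma TT_Ldag:
  assumes "x \<in> TT \<alpha>"
  shows "Ldag \<alpha> x \<in> TT \<alpha>"
proof -
  obtain x1 x2 where x: "x = (\<lambda>n. x1 n + x2 n)" "x1 \<in> Ea \<alpha>" "x2 \<in> Esharp \<alpha>"
    using assms(1) unfolding setsum_fun_def by blast
  have "Ldag \<alpha> x1 \<in> Ea \<alpha>" unfolding Ea_def
  proof (rule cspan_Ldag)
    show "x1 \<in> cspan {(Ldag \<alpha> ^^ j) v |j v. v \<in> kerL \<alpha>}" using x Ea_def by simp
    fix v assume "v \<in> {(Ldag \<alpha> ^^ j) v |j v. v \<in> kerL \<alpha>}"
    then obtain j w where "v = (Ldag \<alpha> ^^ j) w" "w \<in> kerL \<alpha>" by blast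
    then show "Ldag \<alpha> v \<in> {(Ldag \<alpha> ^^ j) v |j v. v \<in> kerL \<alpha>}"
      by (auto intro!: exI[of _ "Suc j"])
  qed
  moreover have "Ldag \<alpha> x2 \<in> Esharp \<alpha>" unfolding Esharp_def
  proof (rule cspan_Ldag)
    show "x2 \<in> cspan {(Ldag \<alpha> ^^ j) (commL \<alpha> v) |j v. v \<in> kerL \<alpha>}" using x Esharp_def by simp
    fix v assume "v \<in> {(Ldag \<alpha> ^^ j) (commL \<alpha> v) |j v. v \<in> kerL \<alpha>}"
    then obtain j w where "v = (Ldag \<alpha> ^^ j) (commL \<alpha> w)" "w \<in> kerL \<alpha>" by blast
    then show "Ldag \<alpha> v \<in> {(Ldag \<alpha> ^^ j) (commL \<alpha> v) |j v. v \<in> kerL \<alpha>}"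
      by (auto intro!: exI[of _ "Suc j"])
  qed
  moreover have "Ldag \<alpha> x = (\<lambda>n. Ldag \<alpha> x1 n + Ldag \<alpha> x2 n)"
    unfolding x(1) by (rule Ldag_add)
  ultimately show ?thesis by (rule setsum_funI)
qed

lemma TT_ker: "v \<in> kerL \<alpha> \<Longrightarrow> v \<in> TT \<alpha>"
proof -
  assume v: "v \<in> kerL \<alpha>"
  have "v \<in> Ea \<alpha>" unfolding Ea_def by (rule cspan_base) (use v in \<open>auto intro!: exI[of _ 0]\<close>)
  moreover have "(\<lambda>_. 0) \<in> Esharp \<alpha>" unfolding Esharp_def by (rule cspan_zero)
  ultimately show "v \<in> TT \<alpha>" by (rule setsum_funI) simp
qed

lemma TT_comm: "v \<in> kerL \<alpha> \<Longrightarrow> commL \<alpha> v \<in> TT \<alpha>"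
proof -
  assume v: "v \<in> kerL \<alpha>"
  have "commL \<alpha> v \<in> Esharp \<alpha>" unfolding Esharp_def by (rule cspan_base) (use v in \<open>auto intro!: exI[of _ 0]\<close>)
  moreover have "(\<lambda>_. 0) \<in> Ea \<alpha>" unfolding Ea_def by (rule cspan_zero)
  ultimately show "commL \<alpha> v \<in> TT \<alpha>" by (intro setsum_funI[of "\<lambda>_. 0" _ "commL \<alpha> v"]) simp_all
qed

lemma cre_coh_TT:
  assumes "\<alpha> \<noteq> 0"
  shows "cre (coh \<alpha>) \<in> TT \<alpha>"
proof -
  have eq: "cre (coh \<alpha>) = (\<lambda>n. (1 / (4 * of_real \<alpha>)) * commL \<alpha> (coh \<alpha>) n + (- 1 / (2 * of_real \<alpha>)) * coh \<alpha> n)"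
  proof
    fix n
    have c1: "cre (coh \<alpha>) n = (if 1 \<le> n then of_real (sqrt (fact n) * \<alpha>^(n-1) / fact (n-1)) else 0)"
      using cre_pow_coh[of 1 \<alpha> n] by simp
    have "commL \<alpha> (coh \<alpha>) n = 4 * of_real \<alpha> * cre (coh \<alpha>) n + 2 * coh \<alpha> n"
    proof (cases n)
      case 0 then show ?thesis by (simp add: commL_eq cre_def)
    next
      case (Suc m)
      have "real (Suc m) * (sqrt (fact (Suc m)) * \<alpha> ^ Suc m / fact (Suc m)) = \<alpha> * (sqrt (fact (Suc m)) * \<alpha> ^ m / fact m)"
        by (simp add: field_simps del: of_nat_Suc)
      note h = this
      have "of_nat (Suc m) * coh \<alpha> n = of_real (real (Suc m) * (sqrt (fact (Suc m)) * \<alpha> ^ Suc m / fact (Suc m)))"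
        unfolding coh_def Suc of_real_mult by simp
      also have "\<dots> = of_real (\<alpha> * (sqrt (fact (Suc m)) * \<alpha> ^ m / fact m))" by (simp only: h)
      also have "\<dots> = of_real \<alpha> * cre (coh \<alpha>) n"
      proof -
        have "cre (coh \<alpha>) n = of_real (sqrt (fact (Suc m)) * \<alpha> ^ m / fact m)" using c1 Suc by simp
        then show ?thesis by (simp only: of_real_mult)
      qed
      finally have "of_nat (Suc m) * coh \<alpha> n = of_real \<alpha> * cre (coh \<alpha>) n" .
      moreover have "commL \<alpha> (coh \<alpha>) n = 4 * (of_nat (Suc m) * coh \<alpha> n) + 2 * coh \<alpha> n"
        unfolding commL_eq Suc by (simp add: algebra_simps)
      ultimately show ?thesis by simp
    qed
    then show "cre (coh \<alpha>) n = (1 / (4 * of_real \<alpha>)) * commL \<alpha> (coh \<alpha>) n + (- 1 / (2 * of_real \<alpha>)) * coh \<alpha> n"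
      using assms by (simp add: field_simps)
  qed
  show ?thesis unfolding eq by (intro TT_lin TT_comm TT_ker coh_ker)
qed

lemma cre_pow_TT:
  assumes "\<alpha> \<noteq> 0"
  shows "(cre ^^ k) (coh \<alpha>) \<in> TT \<alpha>"
proof -
  have "(cre ^^ k) (coh \<alpha>) \<in> TT \<alpha> \<and> (cre ^^ Suc k) (coh \<alpha>) \<in> TT \<alpha>"
  proof (induction k)
    case 0 then show ?case using cre_coh_TT[OF assms] TT_ker[OF coh_ker] by simp
  next
    case (Suc k)
    let ?x = "(cre ^^ k) (coh \<alpha>)"
    have "(cre ^^ Suc (Suc k)) (coh \<alpha>) = (\<lambda>n. 1 * Ldag \<alpha> ?x n + of_real (\<alpha>^2) * ?x n)"
      by (rule ext) (simp add: Ldag_def)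
    moreover have "(\<lambda>n. 1 * Ldag \<alpha> ?x n + of_real (\<alpha>^2) * ?x n) \<in> TT \<alpha>"
      using Suc by (intro TT_lin TT_Ldag) auto
    ultimately show ?case using Suc by simp
  qed
  then show ?thesis by simp
qed



definition gr :: "real \<Rightarrow> nat \<Rightarrow> nat \<Rightarrow> nat \<Rightarrow> real" where
  "gr \<alpha> m N n = (\<Sum>k\<le>N. ((-\<alpha>)^k / fact k) * (if m + k \<le> n then sqrt (fact n) * \<alpha>^(n-(m+k)) / fact (n-(m+k)) else 0))"

definition tr :: "nat \<Rightarrow> nat \<Rightarrow> real" where
  "tr m n = (if n = m then sqrt (fact m) else 0)"

definition gam :: "real \<Rightarrow> nat \<Rightarrow> nat \<Rightarrow> real" where
  "gam \<alpha> m n = (if m \<le> n then fact m * 2^m * (8*\<alpha>^2)^(n-m) / fact (n-m) else 0)"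

lemma gam_nonneg: "gam \<alpha> m n \<ge> 0"
  unfolding gam_def by auto

lemma gvec_TT:
  assumes "\<alpha> \<noteq> 0"
  shows "(\<lambda>n. complex_of_real (gr \<alpha> m N n)) \<in> TT \<alpha>"
proof -
  have "(\<lambda>n. complex_of_real (gr \<alpha> m N n)) = (\<lambda>n. \<Sum>k\<in>{..N}. of_real ((-\<alpha>)^k / fact k) * (cre ^^ (m+k)) (coh \<alpha>) n)"
    unfolding gr_def cre_pow_coh by (rule ext) (auto simp: of_real_sum intro!: sum.cong)
  also have "\<dots> \<in> TT \<alpha>" by (rule TT_sum) (auto intro: cre_pow_TT[OF assms])
  finally show ?thesis .
qed

lemma gr_eq:
  assumes "m \<le> n"
  shows "gr \<alpha> m N n = sqrt (fact n) * \<alpha>^(n-m) / fact (n-m) *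
     (\<Sum>k\<le>N. if k \<le> n - m then (-1)^k * real ((n-m) choose k) else 0)"
proof -
  define j where "j = n - m"
  have t: "((-\<alpha>)^k / fact k) * (if m + k \<le> n then sqrt (fact n) * \<alpha>^(n-(m+k)) / fact (n-(m+k)) else 0)
     = sqrt (fact n) * \<alpha>^j / fact j * (if k \<le> j then (-1)^k * real (j choose k) else 0)" for k
  proof (cases "k \<le> j")
    case True
    then have e1: "n - (m+k) = j - k" and mk: "m + k \<le> n" using assms unfolding j_def by auto
    have e2: "\<alpha>^j = \<alpha>^k * \<alpha>^(j-k)" using True by (simp flip: power_add)
    have e3: "real (j choose k) = fact j / (fact k * fact (j - k))" using binomial_fact[OF True] by simp
    have "(-\<alpha>)^k = (-1)^k * \<alpha>^k" by (simp flip: power_mult_distrib)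
    then show ?thesis using True mk unfolding e1 e2 e3 by (simp add: field_simps)
  next
    case False
    then show ?thesis unfolding j_def by auto
  qed
  show ?thesis unfolding gr_def t j_def[symmetric] by (simp add: sum_distrib_left)
qed

lemma key_bound: "(gr \<alpha> m N n - tr m n)^2 \<le> (if Suc N \<le> n then gam \<alpha> m n else 0)"
proof (cases "m \<le> n")
  case False
  then have "gr \<alpha> m N n = 0" unfolding gr_def by auto
  moreover have "tr m n = 0" using False unfolding tr_def by auto
  ultimately show ?thesis using gam_nonneg by auto
next
  case True
  define j where "j = n - m"
  have n: "n = m + j" using True unfolding j_def by simp
  define s where "s = (\<Sum>k\<le>N. if k \<le> j then (-1)^k * real (j choose k) else 0 :: real)"
  define A where "A = sqrt (fact n) * \<alpha>^j / fact j"
  have g: "gr \<alpha> m N n = A * s" unfolding gr_eq[OF True] A_def s_def j_def ..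
  show ?thesis
  proof (cases "j \<le> N")
    case True
    have "s = (\<Sum>k\<in>{..N} \<inter> {..j}. (-1)^k * real (j choose k))"
      unfolding s_def by (subst sum.inter_restrict) auto
    also have "{..N} \<inter> {..j} = {..j}" using True by auto
    finally have s: "s = (\<Sum>k\<le>j. (-1)^k * real (j choose k))" .
    show ?thesis
    proof (cases "j = 0")
      case True
      then have "s = 1" unfolding s by simp
      then have "gr \<alpha> m N n = tr m n" using True n unfolding g A_def tr_def by simp
      then show ?thesis using gam_nonneg by auto
    next
      case False
      then have "s = 0" unfolding s by (simp add: choose_alternating_sum)
      moreover have "tr m n = 0" using False n unfolding tr_def by auto
      ultimately show ?thesis using gam_nonneg g by auto
    qed
  next
    case False
    have tr0: "tr m n = 0" using False n unfolding tr_def by auto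
    have "\<bar>s\<bar> \<le> (\<Sum>k\<le>N. \<bar>if k \<le> j then (-1)^k * real (j choose k) else 0\<bar>)"
      unfolding s_def by (rule sum_abs)
    also have "\<dots> \<le> (\<Sum>k\<le>N. real (j choose k))"
      by (rule sum_mono) (auto simp: abs_mult)
    also have "\<dots> \<le> (\<Sum>k\<le>j. real (j choose k))"
      by (rule sum_mono2) (use False in auto)
    also have "\<dots> = 2^j" using choose_row_sum[of j] by (metis of_nat_numeral of_nat_power of_nat_sum)
    finally have sb: "\<bar>s\<bar> \<le> 2^j" .
    have s2: "s^2 \<le> 4^j"
    proof -
      have "s^2 = \<bar>s\<bar>^2" by simp
      also have "\<dots> \<le> (2^j)^2" by (rule power_mono[OF sb]) simp
      also have "\<dots> = 4^j" by (simp add: power2_eq_square flip: power_mult_distrib)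
      finally show ?thesis .
    qed
    have fb: "fact n \<le> (2^n * (fact m * fact j) :: real)"
    proof -
      have "real (n choose m) = fact n / (fact m * fact j)" using binomial_fact[OF True] unfolding j_def by simp
      moreover have "real (n choose m) \<le> 2^n" using binomial_le_pow2[of n m] by (metis of_nat_le_iff of_nat_numeral of_nat_power)
      ultimately have "fact n / (fact m * fact j) \<le> (2^n :: real)" by simp
      then show ?thesis by (simp add: field_simps)
    qed
    have "(gr \<alpha> m N n - tr m n)^2 = A^2 * s^2" unfolding g tr0 by (simp add: power_mult_distrib)
    also have "\<dots> \<le> A^2 * 4^j" by (rule mult_left_mono[OF s2]) simp
    also have "A^2 = fact n * (\<alpha>^2)^j / (fact j)^2"
      unfolding A_def by (simp add: power_divide power_mult_distrib flip: power_mult) (simp add: mult.commute power_mult)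
    also have "fact n * (\<alpha>^2)^j / (fact j)^2 * 4^j \<le> 2^n * (fact m * fact j) * (\<alpha>^2)^j / (fact j)^2 * 4^j"
      by (intro mult_right_mono divide_right_mono mult_right_mono[OF fb]) auto
    also have "\<dots> = gam \<alpha> m n"
      using power_mult_distrib[of "2::real" 4 j, symmetric]
      unfolding gam_def j_def[symmetric] using True n
      by (simp add: power_add power2_eq_square field_simps power_mult_distrib)
    finally show ?thesis using False n by simp
  qed
qed



lemma tail_small:
  fixes a :: "nat \<Rightarrow> real"
  assumes "summable a" "e > 0"
  shows "\<exists>K. \<forall>K'\<ge>K. summable (\<lambda>n. if K' \<le> n then a n else 0) \<and> (\<Sum>n. if K' \<le> n then a n else 0) < e"
proof -
  have sm: "(\<lambda>n. if K' \<le> n then a n else 0) sums (suminf a - sum a {..<K'})" for K'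
  proof -
    have "(\<lambda>n. a n - (if n \<in> {..<K'} then a n else 0)) sums (suminf a - sum a {..<K'})"
      by (rule sums_diff[OF summable_sums[OF assms(1)] sums_If_finite_set]) simp
    moreover have "(\<lambda>n. a n - (if n \<in> {..<K'} then a n else 0)) = (\<lambda>n. if K' \<le> n then a n else 0)"
      by auto
    ultimately show ?thesis by simp
  qed
  obtain K where K: "\<forall>K'\<ge>K. norm (sum a {..<K'} - suminf a) < e"
    using LIMSEQ_D[OF summable_LIMSEQ[OF assms(1)] assms(2)] by blast
  show ?thesis
  proof (intro exI allI impI conjI)
    fix K' assume "K \<le> K'"
    show "summable (\<lambda>n. if K' \<le> n then a n else 0)" using sm by (rule sums_summable)
    have "(\<Sum>n. if K' \<le> n then a n else 0) = suminf a - sum a {..<K'}" using sm by (rule sums_unique[symmetric])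
    also have "\<dots> < e" using K \<open>K \<le> K'\<close> by auto
    finally show "(\<Sum>n. if K' \<le> n then a n else 0) < e" .
  qed
qed

lemma gam_summable: "summable (gam \<alpha> m)"
proof -
  have "(\<lambda>n. gam \<alpha> m (n + m)) = (\<lambda>n. (fact m * 2^m) * (inverse (fact n) * (8*\<alpha>^2)^n))"
    unfolding gam_def by (rule ext) (simp add: field_simps)
  moreover have "summable (\<lambda>n. (fact m * 2^m) * (inverse (fact n) * (8*\<alpha>^2::real)^n))"
    by (rule summable_mult[OF summable_exp])
  ultimately have "summable (\<lambda>n. gam \<alpha> m (n + m))" by simp
  then show ?thesis by simp
qed

lemma sq_add_le: "(cmod (a + b))^2 \<le> 2 * (cmod a)^2 + 2 * (cmod b)^2"
proof -
  have "cmod (a + b) \<le> cmod a + cmod b" by (rule norm_triangle_ineq)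
  then have "(cmod (a + b))^2 \<le> (cmod a + cmod b)^2" by (rule power_mono) simp
  also have "\<dots> \<le> 2 * (cmod a)^2 + 2 * (cmod b)^2"
  proof -
    have "(cmod a + cmod b)^2 + (cmod a - cmod b)^2 = 2 * (cmod a)^2 + 2 * (cmod b)^2"
      by (simp add: power2_eq_square algebra_simps)
    moreover have "(cmod a - cmod b)^2 \<ge> 0" by simp
    ultimately show ?thesis by linarith
  qed
  finally show ?thesis .
qed

theorem lemma8:
  fixes \<alpha> :: real
  assumes "\<alpha> \<noteq> 0"
  shows "dense_ell2 (setsum_fun (Ea \<alpha>) (Esharp \<alpha>))"
  unfolding dense_ell2_def
proof (intro ballI allI impI)
  fix f :: "nat \<Rightarrow> complex" and \<epsilon> :: real
  assume f: "f \<in> ell2" and e: "\<epsilon> > 0"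
  have sf: "summable (\<lambda>n. (cmod (f n))^2)" using f unfolding ell2_def by simp
  obtain K where K: "\<forall>K'\<ge>K. summable (\<lambda>n. if K' \<le> n then (cmod (f n))^2 else 0)
      \<and> (\<Sum>n. if K' \<le> n then (cmod (f n))^2 else 0) < \<epsilon>/4"
    using tail_small[OF sf, of "\<epsilon>/4"] e by auto
  define M where "M = Suc K"
  have M0: "M > 0" unfolding M_def by simp
  define tl where "tl n = (if M \<le> n then (cmod (f n))^2 else 0)" for n
  have tls: "summable tl" and tll: "suminf tl < \<epsilon>/4" using K unfolding M_def tl_def by auto
  define d where "d m = f m / of_real (sqrt (fact m))" for m
  define \<delta> where "\<delta> m = \<epsilon> / (8 * (real M)^2 * ((cmod (d m))^2 + 1))" for m
  have dpos: "\<delta> m > 0" for m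
  proof -
    have "(cmod (d m))^2 + 1 > 0" by (simp add: add_nonneg_pos)
    moreover have "(real M)^2 > 0" using M0 by simp
    ultimately show ?thesis unfolding \<delta>_def using e by (intro divide_pos_pos mult_pos_pos) auto
  qed
  have "\<forall>m. \<exists>N. summable (\<lambda>n. if Suc N \<le> n then gam \<alpha> m n else 0) \<and> (\<Sum>n. if Suc N \<le> n then gam \<alpha> m n else 0) < \<delta> m"
  proof
    fix m
    obtain K0 where "\<forall>K'\<ge>K0. summable (\<lambda>n. if K' \<le> n then gam \<alpha> m n else 0) \<and> (\<Sum>n. if K' \<le> n then gam \<alpha> m n else 0) < \<delta> m"
      using tail_small[OF gam_summable[of \<alpha> m] dpos[of m]] by (rule exE)
    then show "\<exists>N. summable (\<lambda>n. if Suc N \<le> n then gam \<alpha> m n else 0) \<and> (\<Sum>n. if Suc N \<le> n then gam \<alpha> m n else 0) < \<delta> m"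
      by (intro exI[of _ K0]) simp
  qed
  then have "\<exists>Nf. \<forall>m. summable (\<lambda>n. if Suc (Nf m) \<le> n then gam \<alpha> m n else 0) \<and> (\<Sum>n. if Suc (Nf m) \<le> n then gam \<alpha> m n else 0) < \<delta> m"
    by (rule choice)
  then obtain Nf where Nf: "\<And>m. summable (\<lambda>n. if Suc (Nf m) \<le> n then gam \<alpha> m n else 0)"
      "\<And>m. (\<Sum>n. if Suc (Nf m) \<le> n then gam \<alpha> m n else 0) < \<delta> m"
    by blast
  define \<Gamma> where "\<Gamma> m n = (if Suc (Nf m) \<le> n then gam \<alpha> m n else 0)" for m n
  have \<Gamma>s: "summable (\<Gamma> m)" and \<Gamma>l: "suminf (\<Gamma> m) < \<delta> m" for m
    using Nf unfolding \<Gamma>_def by auto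
  define w where "w m n = complex_of_real (gr \<alpha> m (Nf m) n)" for m n
  define G where "G n = (\<Sum>m\<in>{..<M}. d m * w m n)" for n
  have GT: "G \<in> TT \<alpha>"
  proof -
    have "(\<lambda>n. \<Sum>m\<in>{..<M}. d m * w m n) \<in> TT \<alpha>"
      by (rule TT_sum) (auto simp: w_def intro: gvec_TT[OF assms])
    then show ?thesis unfolding G_def[abs_def] .
  qed
  define B where "B n = 2 * tl n + 2 * real M * (\<Sum>m\<in>{..<M}. (cmod (d m))^2 * \<Gamma> m n)" for n
  have pw: "(cmod (f n - G n))^2 \<le> B n" for n
  proof -
    define T where "T = (if M \<le> n then f n else 0)"
    have s1: "(\<Sum>m\<in>{..<M}. d m * of_real (tr m n)) = (if n < M then f n else 0)"
    proof -
      have "(\<Sum>m\<in>{..<M}. d m * of_real (tr m n)) = (\<Sum>m\<in>{..<M}. if n = m then d m * of_real (sqrt (fact m)) else 0)"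
        unfolding tr_def by (rule sum.cong) auto
      also have "\<dots> = (if n < M then d n * of_real (sqrt (fact n)) else 0)" by (simp add: sum.delta)
      also have "\<dots> = (if n < M then f n else 0)" unfolding d_def by simp
      finally show ?thesis .
    qed
    define x where "x m = cmod (d m) * \<bar>tr m n - gr \<alpha> m (Nf m) n\<bar>" for m
    have eq: "f n - G n = T + (\<Sum>m\<in>{..<M}. d m * of_real (tr m n - gr \<alpha> m (Nf m) n))"
      unfolding G_def w_def T_def of_real_diff right_diff_distrib sum_subtractf s1 by auto
    have "cmod (\<Sum>m\<in>{..<M}. d m * of_real (tr m n - gr \<alpha> m (Nf m) n)) \<le> (\<Sum>m\<in>{..<M}. x m)"
      unfolding x_def by (rule order_trans[OF norm_sum]) (simp add: norm_mult flip: of_real_diff)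
    then have "(cmod (\<Sum>m\<in>{..<M}. d m * of_real (tr m n - gr \<alpha> m (Nf m) n)))^2 \<le> (\<Sum>m\<in>{..<M}. x m)^2"
      by (rule power_mono) simp
    also have "\<dots> \<le> (\<Sum>m\<in>{..<M}. (x m)^2) * real M"
      using sum_squared_le_sum_of_squares[of x "{..<M}"] by simp
    also have "\<dots> \<le> (\<Sum>m\<in>{..<M}. (cmod (d m))^2 * \<Gamma> m n) * real M"
    proof (intro mult_right_mono sum_mono)
      fix m
      have "(tr m n - gr \<alpha> m (Nf m) n)^2 \<le> \<Gamma> m n"
        using key_bound[of \<alpha> m "Nf m" n] unfolding \<Gamma>_def by (simp add: power2_commute)
      then show "(x m)^2 \<le> (cmod (d m))^2 * \<Gamma> m n"
        unfolding x_def by (simp add: power_mult_distrib mult_left_mono)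
    qed simp
    finally have b2: "(cmod (\<Sum>m\<in>{..<M}. d m * of_real (tr m n - gr \<alpha> m (Nf m) n)))^2 \<le> (\<Sum>m\<in>{..<M}. (cmod (d m))^2 * \<Gamma> m n) * real M" .
    have "(cmod T)^2 = tl n" unfolding T_def tl_def by simp
    then show ?thesis unfolding eq B_def
      using sq_add_le[of T "\<Sum>m\<in>{..<M}. d m * of_real (tr m n - gr \<alpha> m (Nf m) n)"] b2 by (simp add: algebra_simps)
  qed
  have Bs: "summable B"
    unfolding B_def by (intro summable_add summable_mult tls summable_sum \<Gamma>s)
  have sfg: "summable (\<lambda>n. (cmod (f n - G n))^2)"
    by (rule summable_comparison_test'[OF Bs]) (use pw in simp)
  have "(\<Sum>n. (cmod (f n - G n))^2) \<le> suminf B"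
    by (rule suminf_le[OF pw sfg Bs])
  also have "suminf B = 2 * suminf tl + 2 * real M * (\<Sum>m\<in>{..<M}. (cmod (d m))^2 * suminf (\<Gamma> m))"
  proof -
    have a: "summable (\<lambda>n. 2 * tl n)" using tls by (rule summable_mult)
    have b: "summable (\<lambda>n. 2 * real M * (\<Sum>m\<in>{..<M}. (cmod (d m))^2 * \<Gamma> m n))"
      by (intro summable_mult summable_sum \<Gamma>s)
    have "suminf B = (\<Sum>n. 2 * tl n) + (\<Sum>n. 2 * real M * (\<Sum>m\<in>{..<M}. (cmod (d m))^2 * \<Gamma> m n))"
      unfolding B_def by (rule suminf_add[OF a b, symmetric])
    also have "(\<Sum>n. 2 * tl n) = 2 * suminf tl" by (rule suminf_mult[OF tls])
    also have "(\<Sum>n. 2 * real M * (\<Sum>m\<in>{..<M}. (cmod (d m))^2 * \<Gamma> m n)) = 2 * real M * (\<Sum>n. (\<Sum>m\<in>{..<M}. (cmod (d m))^2 * \<Gamma> m n))"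
      by (rule suminf_mult) (intro summable_sum summable_mult \<Gamma>s)
    also have "(\<Sum>n. (\<Sum>m\<in>{..<M}. (cmod (d m))^2 * \<Gamma> m n)) = (\<Sum>m\<in>{..<M}. (\<Sum>n. (cmod (d m))^2 * \<Gamma> m n))"
      by (rule suminf_sum) (intro summable_mult \<Gamma>s)
    also have "\<dots> = (\<Sum>m\<in>{..<M}. (cmod (d m))^2 * suminf (\<Gamma> m))"
      by (rule sum.cong) (auto intro: suminf_mult \<Gamma>s)
    finally show ?thesis .
  qed
  also have "\<dots> < \<epsilon>"
  proof -
    have each: "(cmod (d m))^2 * suminf (\<Gamma> m) \<le> \<epsilon> / (8 * (real M)^2)" for m
    proof -
      let ?c = "(cmod (d m))^2"
      have "?c * suminf (\<Gamma> m) \<le> ?c * \<delta> m" using \<Gamma>l[of m] by (intro mult_left_mono) auto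
      also have "\<dots> = \<epsilon> / (8 * (real M)^2) * (?c / (?c + 1))"
        unfolding \<delta>_def by (simp add: field_simps)
      also have "\<dots> \<le> \<epsilon> / (8 * (real M)^2) * 1"
      proof (rule mult_left_mono)
        have "?c + 1 > 0" by (simp add: add_nonneg_pos)
        then show "?c / (?c + 1) \<le> 1" by (simp add: divide_le_eq_1)
      qed (use e in simp)
      finally show ?thesis by simp
    qed
    have "(\<Sum>m\<in>{..<M}. (cmod (d m))^2 * suminf (\<Gamma> m)) \<le> (\<Sum>m\<in>{..<M}. \<epsilon> / (8 * (real M)^2))"
      by (rule sum_mono) (rule each)
    also have "\<dots> = \<epsilon> / (8 * real M)" using M0 by (simp add: power2_eq_square)
    finally have "2 * real M * (\<Sum>m\<in>{..<M}. (cmod (d m))^2 * suminf (\<Gamma> m)) \<le> 2 * real M * (\<epsilon> / (8 * real M))"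
      by (intro mult_left_mono) auto
    also have "\<dots> = \<epsilon> / 4" using M0 by simp
    finally show ?thesis using tll e by linarith
  qed
  finally show "\<exists>g\<in>setsum_fun (Ea \<alpha>) (Esharp \<alpha>). summable (\<lambda>n. (cmod (f n - g n))\<^sup>2) \<and> (\<Sum>n. (cmod (f n - g n))\<^sup>2) < \<epsilon>"
    using GT sfg by blast
qed

end
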